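(* For every finite graph $G$ and every pair of positive integers $g,k$, there exist a finite graph $G'$ with girth at least $g$ and a surjective homomorphism $h:V(G')\to V(G)$ such that for every proper $k$-colouring $c'$ of $G'$ there is a proper $k$-colouring $c$ of $G$ with $c(v)\in c'(h^{-1}(v))$ for all $v\in V(G)$. In particular $\chi(G')=\chi(G)$.
   Context: A homomorphism from $G'$ to $G$ is a map $h:V(G')\to V(G)$ such that $uv\in E(G')$ implies $h(u)h(v)\in E(G)$. A proper $k$-colouring is a map to $\{1,\dots,k\}$ giving adjacent vertices different colours. For a set $A$ of vertices, $c'(A)$ denotes the set of colours used on $A$. The girth of a graph is the length of its shortest cycle (infinite if acyclic). *)

theory Defs
  imports Main
begin

definition fin_graph :: "'a set \<Rightarrow> ('a \<times> 'a) set \<Rightarrow> bool" where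
  "fin_graph V E \<longleftrightarrow> finite V \<and> E \<subseteq> V \<times> V \<and> sym E \<and> irrefl E"

definition is_cycle :: "'a set \<Rightarrow> ('a \<times> 'a) set \<Rightarrow> 'a list \<Rightarrow> bool" where
  "is_cycle V E vs \<longleftrightarrow> length vs \<ge> 3 \<and> distinct vs \<and> set vs \<subseteq> V
     \<and> (\<forall>i < length vs - 1. (vs ! i, vs ! Suc i) \<in> E)
     \<and> (last vs, hd vs) \<in> E"

text \<open>Girth at least g: every cycle has length at least g (vacuous if acyclic,
  matching girth = infinity).\<close>
definition girth_at_least :: "'a set \<Rightarrow> ('a \<times> 'a) set \<Rightarrow> nat \<Rightarrow> bool" where
  "girth_at_least V E g \<longleftrightarrow> (\<forall>vs. is_cycle V E vs \<longrightarrow> length vs \<ge> g)"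

definition graph_hom ::
  "'b set \<Rightarrow> ('b \<times> 'b) set \<Rightarrow> 'a set \<Rightarrow> ('a \<times> 'a) set \<Rightarrow> ('b \<Rightarrow> 'a) \<Rightarrow> bool" where
  "graph_hom V' E' V E h \<longleftrightarrow> h ` V' \<subseteq> V \<and> (\<forall>(u, v) \<in> E'. (h u, h v) \<in> E)"

definition proper_colouring ::
  "'a set \<Rightarrow> ('a \<times> 'a) set \<Rightarrow> nat \<Rightarrow> ('a \<Rightarrow> nat) \<Rightarrow> bool" where
  "proper_colouring V E k c \<longleftrightarrow> c ` V \<subseteq> {1..k} \<and> (\<forall>(u, v) \<in> E. c u \<noteq> c v)"

end

theory Submission
  imports Defs Complex_Main
begin


definition wt :: "'b set \<Rightarrow> real \<Rightarrow> 'b set \<Rightarrow> real" where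
  "wt U p S = (\<Prod>x\<in>U. if x \<in> S then p else 1 - p)"

lemma sum_Pow_prod:
  fixes a b :: "'b \<Rightarrow> real"
  assumes "finite W"
  shows "(\<Sum>S\<in>Pow W. \<Prod>x\<in>W. if x \<in> S then a x else b x) = (\<Prod>x\<in>W. a x + b x)"
  using assms
proof (induction W rule: finite_induct)
  case empty
  then show ?case by simp
next
  case (insert y W)
  have disj: "Pow W \<inter> insert y ` Pow W = {}" using insert by auto
  have inj: "inj_on (insert y) (Pow W)" using insert unfolding inj_on_def by (auto simp: Pow_def)
  have e1: "\<And>S. S \<in> Pow W \<Longrightarrow> (\<Prod>x\<in>insert y W. if x \<in> S then a x else b x) = b y * (\<Prod>x\<in>W. if x \<in> S then a x else b x)"
    using insert by (auto simp: prod.insert)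
  have e2: "\<And>S. S \<in> Pow W \<Longrightarrow> (\<Prod>x\<in>insert y W. if x \<in> insert y S then a x else b x) = a y * (\<Prod>x\<in>W. if x \<in> S then a x else b x)"
  proof -
    fix S assume "S \<in> Pow W"
    have "(\<Prod>x\<in>W. if x \<in> insert y S then a x else b x) = (\<Prod>x\<in>W. if x \<in> S then a x else b x)"
      using insert by (intro prod.cong) auto
    then show "?thesis S" using insert by (simp add: prod.insert)
  qed
  have "(\<Sum>S\<in>Pow (insert y W). \<Prod>x\<in>insert y W. if x \<in> S then a x else b x)
      = (\<Sum>S\<in>Pow W. \<Prod>x\<in>insert y W. if x \<in> S then a x else b x)
        + (\<Sum>S\<in>insert y ` Pow W. \<Prod>x\<in>insert y W. if x \<in> S then a x else b x)"
    unfolding Pow_insert using insert disj by (intro sum.union_disjoint) auto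
  also have "\<dots> = b y * (\<Sum>S\<in>Pow W. \<Prod>x\<in>W. if x \<in> S then a x else b x)
        + a y * (\<Sum>S\<in>Pow W. \<Prod>x\<in>W. if x \<in> S then a x else b x)"
    using e1 e2 by (simp add: sum.reindex[OF inj] sum_distrib_left del: insert_iff)
  also have "\<dots> = (\<Prod>x\<in>insert y W. a x + b x)"
    using insert by (simp add: algebra_simps prod.insert)
  finally show ?case .
qed

lemma wt_total: "finite U \<Longrightarrow> (\<Sum>S\<in>Pow U. wt U p S) = 1"
  unfolding wt_def using sum_Pow_prod[of U "\<lambda>_. p" "\<lambda>_. 1 - p"] by simp

lemma wt_nonneg: "0 \<le> p \<Longrightarrow> p \<le> 1 \<Longrightarrow> 0 \<le> wt U p S"
  unfolding wt_def by (intro prod_nonneg) auto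

lemma wt_sub:
  assumes "finite U" "T \<subseteq> U"
  shows "(\<Sum>S\<in>Pow U. if T \<subseteq> S then wt U p S else 0) = p ^ card T"
proof -
  have "\<And>S. S \<in> Pow U \<Longrightarrow> (if T \<subseteq> S then wt U p S else 0)
      = (\<Prod>x\<in>U. if x \<in> S then p else (if x \<in> T then 0 else 1 - p))"
  proof -
    fix S assume S: "S \<in> Pow U"
    show "?thesis S"
    proof (cases "T \<subseteq> S")
      case True
      then show ?thesis unfolding wt_def by (simp, intro prod.cong) auto
    next
      case False
      then obtain z where z: "z \<in> T" "z \<notin> S" by auto
      then have "z \<in> U" using assms by auto
      then show ?thesis using False z assms(1) by (auto intro!: prod_zero)
    qed
  qed
  then have "(\<Sum>S\<in>Pow U. if T \<subseteq> S then wt U p S else 0)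
     = (\<Sum>S\<in>Pow U. \<Prod>x\<in>U. if x \<in> S then p else (if x \<in> T then 0 else 1 - p))"
    by (rule sum.cong[OF refl])
  also have "\<dots> = (\<Prod>x\<in>U. p + (if x \<in> T then 0 else 1 - p))"
    by (rule sum_Pow_prod[OF assms(1)])
  also have "\<dots> = (\<Prod>x\<in>U. if x \<in> T then p else 1)"
    by (intro prod.cong) auto
  also have "\<dots> = p ^ card T"
    using assms by (simp add: prod.If_cases Int_absorb1)
  finally show ?thesis .
qed

lemma wt_disj:
  assumes "finite U" "T \<subseteq> U"
  shows "(\<Sum>S\<in>Pow U. if T \<inter> S = {} then wt U p S else 0) = (1 - p) ^ card T"
proof -
  have "\<And>S. S \<in> Pow U \<Longrightarrow> (if T \<inter> S = {} then wt U p S else 0)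
      = (\<Prod>x\<in>U. if x \<in> S then (if x \<in> T then 0 else p) else 1 - p)"
  proof -
    fix S assume S: "S \<in> Pow U"
    show "?thesis S"
    proof (cases "T \<inter> S = {}")
      case True
      then show ?thesis unfolding wt_def by (simp, intro prod.cong) auto
    next
      case False
      then obtain z where z: "z \<in> T" "z \<in> S" by auto
      then have "z \<in> U" using assms by auto
      then show ?thesis using False z assms(1) by (auto intro!: prod_zero)
    qed
  qed
  then have "(\<Sum>S\<in>Pow U. if T \<inter> S = {} then wt U p S else 0)
     = (\<Sum>S\<in>Pow U. \<Prod>x\<in>U. if x \<in> S then (if x \<in> T then 0 else p) else 1 - p)"
    by (rule sum.cong[OF refl])
  also have "\<dots> = (\<Prod>x\<in>U. (if x \<in> T then 0 else p) + (1 - p))"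
    by (rule sum_Pow_prod[OF assms(1)])
  also have "\<dots> = (\<Prod>x\<in>U. if x \<in> T then 1 - p else 1)"
    by (intro prod.cong) auto
  also have "\<dots> = (1 - p) ^ card T"
    using assms by (simp add: prod.If_cases Int_absorb1)
  finally show ?thesis .
qed




definition Ed :: "nat set set \<Rightarrow> (nat \<times> nat) set" where
  "Ed S = {(x,y). {x,y} \<in> S}"

definition cyc :: "nat list \<Rightarrow> nat set set" where
  "cyc vs = (\<lambda>i. {vs!i, vs!(Suc i mod length vs)}) ` {..<length vs}"

lemma cyc_sub:
  assumes "is_cycle X (Ed S) vs"
  shows "cyc vs \<subseteq> S"
proof
  fix e assume "e \<in> cyc vs"
  then obtain i where i: "i < length vs" "e = {vs!i, vs!(Suc i mod length vs)}"
    unfolding cyc_def by auto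
  have L: "length vs \<ge> 3" using assms unfolding is_cycle_def by auto
  show "e \<in> S"
  proof (cases "i < length vs - 1")
    case True
    then have "Suc i mod length vs = Suc i" by simp
    with True assms show ?thesis using i unfolding is_cycle_def Ed_def by auto
  next
    case False
    then have ii: "i = length vs - 1" using i by simp
    then have "Suc i = length vs" using L by simp
    then have "Suc i mod length vs = 0" by simp
    moreover have "vs \<noteq> []" using L by auto
    moreover have "last vs = vs ! i" using ii L \<open>vs \<noteq> []\<close> by (simp add: last_conv_nth)
    moreover have "hd vs = vs ! 0" using \<open>vs \<noteq> []\<close> by (simp add: hd_conv_nth)
    ultimately show ?thesis using assms i unfolding is_cycle_def Ed_def by auto
  qed
qed

lemma cyc_card:
  assumes "distinct vs" "length vs \<ge> 3"
  shows "card (cyc vs) = length vs"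
proof -
  let ?L = "length vs"
  have "inj_on (\<lambda>i. {vs!i, vs!(Suc i mod ?L)}) {..<?L}"
  proof (rule inj_onI)
    fix i j assume ij: "i \<in> {..<?L}" "j \<in> {..<?L}"
      and eq: "{vs!i, vs!(Suc i mod ?L)} = {vs!j, vs!(Suc j mod ?L)}"
    have Lp: "0 < ?L" using assms by linarith
    have mi: "Suc i mod ?L < ?L" "Suc j mod ?L < ?L" using Lp by simp_all
    have D: "\<And>a b. a < ?L \<Longrightarrow> b < ?L \<Longrightarrow> vs!a = vs!b \<longleftrightarrow> a = b"
      using assms(1) by (simp add: nth_eq_iff_index_eq)
    show "i = j"
    proof (rule ccontr)
      assume ne: "i \<noteq> j"
      then have "vs!i \<noteq> vs!j" using D ij by auto
      with eq have a: "vs!i = vs!(Suc j mod ?L)" and b: "vs!(Suc i mod ?L) = vs!j"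
        by (auto simp: doubleton_eq_iff)
      from a have a': "i = Suc j mod ?L" using D ij mi by auto
      from b have b': "Suc i mod ?L = j" using D ij mi by auto
      show False
      proof (cases "Suc j < ?L")
        case True
        then have "i = Suc j" using a' by simp
        show False
        proof (cases "Suc (Suc j) < ?L")
          case True
          then show False using b' \<open>i = Suc j\<close> by simp
        next
          case False
          then have "Suc (Suc j) = ?L" using \<open>Suc j < ?L\<close> by simp
          then have "j = 0" using b' \<open>i = Suc j\<close> by simp
          then show False using \<open>Suc (Suc j) = ?L\<close> assms(2) by simp
        qed
      next
        case False
        then have "Suc j = ?L" using ij by simp
        then have "i = 0" using a' by simp
        then have "j = 1" using b' assms(2) by simp
        then show False using \<open>Suc j = ?L\<close> assms(2) by simp
      qed
    qed
  qed
  then show ?thesis unfolding cyc_def by (simp add: card_image)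
qed




lemma cycle_prob:
  assumes "finite U" "0 \<le> p" "p \<le> 1"
  shows "(\<Sum>S\<in>Pow U. if is_cycle X (Ed S) vs then wt U p S else 0) \<le> p ^ length vs"
proof (cases "distinct vs \<and> length vs \<ge> 3 \<and> cyc vs \<subseteq> U")
  case True
  have "(\<Sum>S\<in>Pow U. if is_cycle X (Ed S) vs then wt U p S else 0)
      \<le> (\<Sum>S\<in>Pow U. if cyc vs \<subseteq> S then wt U p S else 0)"
    by (intro sum_mono) (use cyc_sub wt_nonneg[OF assms(2,3)] in auto)
  also have "\<dots> = p ^ card (cyc vs)" using True assms by (intro wt_sub) auto
  also have "\<dots> = p ^ length vs" using True cyc_card by simp
  finally show ?thesis .
next
  case False
  have "\<And>S. S \<in> Pow U \<Longrightarrow> \<not> is_cycle X (Ed S) vs"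
  proof
    fix S assume S: "S \<in> Pow U" and c: "is_cycle X (Ed S) vs"
    then have "cyc vs \<subseteq> U" using cyc_sub[OF c] by auto
    with c False show False unfolding is_cycle_def by auto
  qed
  then have "(\<Sum>S\<in>Pow U. if is_cycle X (Ed S) vs then wt U p S else 0) = 0" by simp
  then show ?thesis using assms by simp
qed

lemma expect_cycles:
  assumes "finite X" "finite U" "0 \<le> p" "p \<le> 1"
  shows "(\<Sum>S\<in>Pow U. wt U p S * card {vs. set vs \<subseteq> X \<and> length vs < g \<and> is_cycle X (Ed S) vs})
     \<le> (\<Sum>L<g. (real (card X) * p) ^ L)"
proof -
  define Lg where "Lg = {vs. set vs \<subseteq> X \<and> length vs < g}"
  have Lg_eq: "Lg = (\<Union>L\<in>{..<g}. {vs. set vs \<subseteq> X \<and> length vs = L})"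
    unfolding Lg_def by auto
  have fLg: "finite Lg" unfolding Lg_eq using assms(1) by (auto intro!: finite_lists_length_eq)
  have cardeq: "\<And>S. real (card {vs. set vs \<subseteq> X \<and> length vs < g \<and> is_cycle X (Ed S) vs})
      = (\<Sum>vs\<in>Lg. if is_cycle X (Ed S) vs then 1 else 0)"
  proof -
    fix S
    have "{vs. set vs \<subseteq> X \<and> length vs < g \<and> is_cycle X (Ed S) vs} = {vs\<in>Lg. is_cycle X (Ed S) vs}"
      unfolding Lg_def by auto
    then show "?thesis S" using fLg by (simp add: sum.inter_filter[symmetric])
  qed
  have "(\<Sum>S\<in>Pow U. wt U p S * card {vs. set vs \<subseteq> X \<and> length vs < g \<and> is_cycle X (Ed S) vs})
      = (\<Sum>S\<in>Pow U. \<Sum>vs\<in>Lg. if is_cycle X (Ed S) vs then wt U p S else 0)"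
    by (simp add: cardeq sum_distrib_left if_distrib cong: if_cong)
  also have "\<dots> = (\<Sum>vs\<in>Lg. \<Sum>S\<in>Pow U. if is_cycle X (Ed S) vs then wt U p S else 0)"
    by (rule sum.swap)
  also have "\<dots> \<le> (\<Sum>vs\<in>Lg. p ^ length vs)"
    by (intro sum_mono cycle_prob assms)
  also have "\<dots> = (\<Sum>L<g. \<Sum>vs\<in>{vs. set vs \<subseteq> X \<and> length vs = L}. p ^ length vs)"
    unfolding Lg_eq using assms(1) by (intro sum.UNION_disjoint) (auto intro!: finite_lists_length_eq)
  also have "\<dots> = (\<Sum>L<g. (real (card X) * p) ^ L)"
  proof (intro sum.cong refl)
    fix L
    have "(\<Sum>vs\<in>{vs. set vs \<subseteq> X \<and> length vs = L}. p ^ length vs)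
        = (\<Sum>vs\<in>{vs. set vs \<subseteq> X \<and> length vs = L}. p ^ L)" by (intro sum.cong) auto
    also have "\<dots> = real (card X ^ L) * p ^ L" using card_lists_length_eq[OF assms(1)] by simp
    finally show "(\<Sum>vs\<in>{vs. set vs \<subseteq> X \<and> length vs = L}. p ^ length vs) = (real (card X) * p) ^ L"
      by (simp add: power_mult_distrib)
  qed
  finally show ?thesis .
qed

lemma hole_prob:
  assumes "finite U" "A \<inter> B = {}" "finite A" "finite B"
    "{{x,y} | x y. x \<in> A \<and> y \<in> B} \<subseteq> U"
  shows "(\<Sum>S\<in>Pow U. if (\<forall>x\<in>A. \<forall>y\<in>B. {x,y} \<notin> S) then wt U p S else 0) = (1 - p) ^ (card A * card B)"
proof -
  let ?T = "{{x,y} | x y. x \<in> A \<and> y \<in> B}"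
  have T: "?T = (\<lambda>(x,y). {x,y}) ` (A \<times> B)" by auto
  have inj: "inj_on (\<lambda>(x,y). {x,y}) (A \<times> B)"
    using assms(2) by (auto simp: inj_on_def doubleton_eq_iff)
  have cT: "card ?T = card A * card B" unfolding T using inj by (simp add: card_image card_cartesian_product)
  have "\<And>S. (\<forall>x\<in>A. \<forall>y\<in>B. {x,y} \<notin> S) \<longleftrightarrow> ?T \<inter> S = {}" by auto
  then have "(\<Sum>S\<in>Pow U. if (\<forall>x\<in>A. \<forall>y\<in>B. {x,y} \<notin> S) then wt U p S else 0)
     = (\<Sum>S\<in>Pow U. if ?T \<inter> S = {} then wt U p S else 0)" by simp
  also have "\<dots> = (1 - p) ^ card ?T" using assms by (intro wt_disj) auto
  finally show ?thesis using cT by simp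
qed




lemma good_exists:
  fixes I :: "(nat set \<times> nat set) set" and N :: nat
  assumes fX: "finite X" and fU: "finite U" and p: "0 \<le> p" "p \<le> 1" and N: "N > 0"
    and fI: "finite I"
    and Iprop: "\<And>A B. (A,B) \<in> I \<Longrightarrow> A \<inter> B = {} \<and> finite A \<and> finite B \<and> card A = a \<and> card B = a
                 \<and> {{x,y} | x y. x \<in> A \<and> y \<in> B} \<subseteq> U"
    and bound: "2 / real N * (\<Sum>L<g. (real (card X) * p) ^ L) + real (card I) * (1 - p) ^ (a * a) < 1"
  shows "\<exists>S\<in>Pow U. 2 * card {vs. set vs \<subseteq> X \<and> length vs < g \<and> is_cycle X (Ed S) vs} < N
           \<and> (\<forall>(A,B)\<in>I. \<exists>x\<in>A. \<exists>y\<in>B. {x,y} \<in> S)"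
proof (rule ccontr)
  define cy where "cy S = card {vs. set vs \<subseteq> X \<and> length vs < g \<and> is_cycle X (Ed S) vs}" for S
  define hole where "hole S A B = (\<forall>x\<in>A. \<forall>y\<in>B. {x,y} \<notin> S)" for S and A B :: "nat set"
  assume nt: "\<not> ?thesis"
  have bad: "N \<le> 2 * cy S \<or> (\<exists>(A,B)\<in>I. hole S A B)" if S: "S \<in> Pow U" for S
  proof (rule ccontr)
    assume a: "\<not> (N \<le> 2 * cy S \<or> (\<exists>(A,B)\<in>I. hole S A B))"
    then have "2 * cy S < N" by simp
    moreover have "\<forall>(A,B)\<in>I. \<exists>x\<in>A. \<exists>y\<in>B. {x,y} \<in> S"
      using a unfolding hole_def by blast
    ultimately show False using nt S unfolding cy_def by blast
  qed
  have w0: "\<And>S. 0 \<le> wt U p S" using wt_nonneg p by blast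
  have "1 = (\<Sum>S\<in>Pow U. wt U p S)" using wt_total[OF fU] by simp
  also have "\<dots> \<le> (\<Sum>S\<in>Pow U. (if N \<le> 2 * cy S then wt U p S else 0)
                  + (\<Sum>i\<in>I. if hole S (fst i) (snd i) then wt U p S else 0))"
  proof (intro sum_mono)
    fix S assume S: "S \<in> Pow U"
    show "wt U p S \<le> (if N \<le> 2 * cy S then wt U p S else 0) + (\<Sum>i\<in>I. if hole S (fst i) (snd i) then wt U p S else 0)"
    proof (cases "N \<le> 2 * cy S")
      case True
      have "0 \<le> (\<Sum>i\<in>I. if hole S (fst i) (snd i) then wt U p S else 0)" using w0 by (intro sum_nonneg) auto
      then show ?thesis using True by simp
    next
      case False
      then obtain A B where AB: "(A,B) \<in> I" "hole S A B" using bad[OF S] by auto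
      have "wt U p S = (if hole S (fst (A,B)) (snd (A,B)) then wt U p S else 0)" using AB by simp
      also have "\<dots> \<le> (\<Sum>i\<in>I. if hole S (fst i) (snd i) then wt U p S else 0)"
        using AB fI w0 by (intro member_le_sum) auto
      finally show ?thesis using False by simp
    qed
  qed
  also have "\<dots> = (\<Sum>S\<in>Pow U. if N \<le> 2 * cy S then wt U p S else 0)
                  + (\<Sum>i\<in>I. \<Sum>S\<in>Pow U. if hole S (fst i) (snd i) then wt U p S else 0)"
    by (simp only: sum.distrib sum.swap[of _ I "Pow U"])
  also have "(\<Sum>S\<in>Pow U. if N \<le> 2 * cy S then wt U p S else 0) \<le> (\<Sum>S\<in>Pow U. 2 / real N * (wt U p S * cy S))"
  proof (intro sum_mono)
    fix S
    show "(if N \<le> 2 * cy S then wt U p S else 0) \<le> 2 / real N * (wt U p S * cy S)"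
    proof (cases "N \<le> 2 * cy S")
      case True
      then have "1 \<le> 2 * real (cy S) / real N" using N by (simp add: field_simps)
      then have "wt U p S * 1 \<le> wt U p S * (2 * real (cy S) / real N)" using w0 by (intro mult_left_mono) auto
      then show ?thesis using True by (simp add: field_simps)
    qed (use w0 N in simp)
  qed
  also have "(\<Sum>S\<in>Pow U. 2 / real N * (wt U p S * cy S)) = 2 / real N * (\<Sum>S\<in>Pow U. wt U p S * cy S)"
    by (simp add: sum_distrib_left)
  also have "\<dots> \<le> 2 / real N * (\<Sum>L<g. (real (card X) * p) ^ L)"
    unfolding cy_def using expect_cycles[OF fX fU p] N by (intro mult_left_mono) auto
  also have "(\<Sum>i\<in>I. \<Sum>S\<in>Pow U. if hole S (fst i) (snd i) then wt U p S else 0) = (\<Sum>i\<in>I. (1 - p) ^ (a * a))"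
  proof (intro sum.cong refl)
    fix i assume i: "i \<in> I"
    obtain A B where iAB: "i = (A,B)" by force
    show "(\<Sum>S\<in>Pow U. if hole S (fst i) (snd i) then wt U p S else 0) = (1 - p) ^ (a * a)"
      using Iprop[of A B] i hole_prob[OF fU, of A B p] unfolding iAB hole_def by auto
  qed
  also have "\<dots> = real (card I) * (1 - p) ^ (a * a)" by simp
  finally show False using bound by simp
qed




lemma numeric:
  fixes n k g M B0 K N a :: nat
  assumes n: "n \<ge> 1" and k: "k \<ge> 1" and g: "g \<ge> 1"
    and M: "M = 4*k + 2*n*n + 2" and B0: "B0 = 2*k*n*M" and K: "K = 4*g*B0^g"
    and N: "N = 2*k*K*M" and a: "a = K*M"
  shows "2 / real N * (\<Sum>L<g. (real (n*N) * (1 / real K)) ^ L)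
          + real (n*n) * 4 ^ N * (1 - 1 / real K) ^ (a*a) < 1"
proof -
  have Mp: "M \<ge> 1" using M by simp
  have "1 \<le> 2*k*n*M" using n k Mp by (simp add: one_le_mult_iff)
  then have B0p: "B0 \<ge> 1" using B0 by simp
  have Kp: "K \<ge> 1" using g B0p K by simp
  have e1: "real (n*N) * (1 / real K) = real B0"
    using Kp unfolding N B0 by (simp add: field_simps)
  have "(\<Sum>L<g. (real B0) ^ L) \<le> (\<Sum>L<g. (real B0) ^ g)"
    using B0p by (intro sum_mono power_increasing) auto
  also have "\<dots> = real g * real B0 ^ g" by simp
  finally have s1: "(\<Sum>L<g. (real (n*N) * (1 / real K)) ^ L) \<le> real g * real B0 ^ g" using e1 by simp
  have Npos: "real N > 0" using k Kp Mp N by simp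
  have t1: "2 / real N * (\<Sum>L<g. (real (n*N) * (1 / real K)) ^ L) \<le> 2 / real N * (real g * real B0 ^ g)"
    using s1 Npos by (intro mult_left_mono) auto
  also have "\<dots> = 1 / (4 * real k * real M)"
    using g B0p k Mp unfolding N K by (simp add: field_simps)
  also have "\<dots> \<le> 1 / 4"
  proof -
    have "1 * 1 \<le> real k * real M" using k Mp by (intro mult_mono) auto
    then show ?thesis by (simp add: field_simps)
  qed
  finally have T1: "2 / real N * (\<Sum>L<g. (real (n*N) * (1 / real K)) ^ L) \<le> 1/4" .
  have q0: "0 \<le> 1 - 1 / real K" using Kp by simp
  have q1: "1 - 1 / real K \<le> exp (- (1 / real K))" using exp_ge_add_one_self[of "- (1 / real K)"] by simp
  have "(1 - 1 / real K) ^ (a*a) \<le> exp (- (1 / real K)) ^ (a*a)" by (rule power_mono[OF q1 q0])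
  also have "\<dots> = exp (real (a*a) * (- (1 / real K)))" by (rule exp_of_nat_mult[symmetric])
  also have "real (a*a) * (- (1 / real K)) = - (real K * real M * real M)" using Kp unfolding a by (simp add: field_simps)
  finally have p2: "(1 - 1 / real K) ^ (a*a) \<le> exp (- (real K * real M * real M))" .
  have two: "(2::real) \<le> exp 1" using exp_ge_add_one_self[of 1] by simp
  have "(4::real) ^ N = (2 * 2) ^ N" by simp
  also have "\<dots> \<le> (exp 1 * exp 1) ^ N" using two by (intro power_mono mult_mono) auto
  also have "\<dots> = exp (real N * 2)" by (simp add: exp_of_nat_mult[symmetric] exp_add[symmetric])
  finally have p4: "(4::real) ^ N \<le> exp (real N * 2)" .
  have "real (n*n) * 4 ^ N * (1 - 1 / real K) ^ (a*a) \<le> real (n*n) * exp (real N * 2) * exp (- (real K * real M * real M))"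
    using p2 p4 q0 by (intro mult_mono) auto
  also have "\<dots> = real (n*n) * exp (real N * 2 - real K * real M * real M)" by (simp add: exp_diff exp_minus field_simps)
  also have "real N * 2 - real K * real M * real M = - (real K * real M * (2 * real n * real n + 2))"
    unfolding N using M by (simp add: field_simps)
  also have "- (real K * real M * (2 * real n * real n + 2)) \<le> - (2 * real n * real n + 2)"
  proof -
    have "1 * 1 \<le> real K * real M" using Kp Mp by (intro mult_mono) auto
    then have "1 * (2 * real n * real n + 2) \<le> real K * real M * (2 * real n * real n + 2)"
      by (intro mult_right_mono) auto
    then show ?thesis by simp
  qed
  then have "real (n*n) * exp (- (real K * real M * (2 * real n * real n + 2))) \<le> real (n*n) * exp (- (2 * real n * real n + 2))"
    by (intro mult_left_mono) auto
  also have "exp (- (2 * real n * real n + 2)) \<le> 1 / (2 * real n * real n + 3)"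
  proof -
    define y where "y = 2 * real n * real n + 2"
    have y0: "0 \<le> y" unfolding y_def by simp
    have h: "1 + y \<le> exp y" by (rule exp_ge_add_one_self)
    have "exp (- y) = 1 / exp y" by (simp add: exp_minus inverse_eq_divide)
    also have "\<dots> \<le> 1 / (1 + y)" using h y0 by (intro divide_left_mono) auto
    finally show ?thesis unfolding y_def by (simp add: add.commute add.left_commute)
  qed
  then have "real (n*n) * exp (- (2 * real n * real n + 2)) \<le> real (n*n) * (1 / (2 * real n * real n + 3))"
    by (intro mult_left_mono) auto
  also have "\<dots> < 1/2"
  proof -
    define x where "x = real n * real n"
    have x0: "0 \<le> x" unfolding x_def by simp
    have "x / (2 * x + 3) < 1/2" using x0 by (auto simp: divide_less_eq)
    then show ?thesis unfolding x_def by (simp add: mult.assoc)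
  qed
  finally have T2: "real (n*n) * 4 ^ N * (1 - 1 / real K) ^ (a*a) < 1/2" by simp
  show ?thesis using T1 T2 by simp
qed



lemma fiber_eq:
  fixes N j n :: nat
  assumes "N > 0" "j < n" "inj_on \<phi> {0..<n}"
  shows "{x \<in> {0..<n*N}. \<phi> (x div N) = \<phi> j} = {j*N..<j*N+N}"
proof -
  have "x \<in> {0..<n*N} \<and> \<phi> (x div N) = \<phi> j \<longleftrightarrow> x \<in> {j*N..<j*N+N}" for x
  proof
    assume a: "x \<in> {0..<n*N} \<and> \<phi> (x div N) = \<phi> j"
    then have "x div N < n" using assms(1) by (simp add: less_mult_imp_div_less)
    then have "x div N = j" using a assms(2,3) by (auto dest: inj_onD)
    then have "j*N \<le> x \<and> x < j*N+N" using assms(1)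
      by (metis add.commute div_times_less_eq_dividend dividend_less_div_times)
    then show "x \<in> {j*N..<j*N+N}" by simp
  next
    assume b: "x \<in> {j*N..<j*N+N}"
    then have "x div N = j" using assms(1) by (simp add: div_nat_eqI mult.commute)
    moreover have "x < n*N" using b assms(2)
      by (simp, metis Suc_leI add.commute mult_Suc mult_le_cancel2 order_less_le_trans)
    ultimately show "x \<in> {0..<n*N} \<and> \<phi> (x div N) = \<phi> j" by simp
  qed
  then show ?thesis by blast
qed



theorem mainTheorem7:
  fixes V :: "'a set" and E :: "('a \<times> 'a) set" and g k :: nat
  assumes "fin_graph V E" and "0 < g" and "0 < k"
  shows "\<exists>(V' :: nat set) (E' :: (nat \<times> nat) set) (h :: nat \<Rightarrow> 'a).
           fin_graph V' E' \<and> girth_at_least V' E' g \<and>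
           graph_hom V' E' V E h \<and> h ` V' = V \<and>
           (\<forall>c'. proper_colouring V' E' k c' \<longrightarrow>
              (\<exists>c. proper_colouring V E k c \<and>
                   (\<forall>v \<in> V. c v \<in> c' ` {u \<in> V'. h u = v})))"
proof (cases "V = {}")
  case True
  then have E0: "E = {}" using assms(1) unfolding fin_graph_def by auto
  have "fin_graph ({}::nat set) {}" unfolding fin_graph_def sym_def irrefl_def by auto
  moreover have "girth_at_least ({}::nat set) {} g" unfolding girth_at_least_def is_cycle_def by auto
  moreover have "graph_hom ({}::nat set) {} V E (\<lambda>_. undefined)" unfolding graph_hom_def by auto
  moreover have "proper_colouring V E k (\<lambda>_. 1)" unfolding proper_colouring_def using True E0 by auto
  ultimately show ?thesis using True by blast
next
  case False
  have fV: "finite V" and EV: "E \<subseteq> V \<times> V" and symE: "sym E" and irrE: "irrefl E"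
    using assms(1) unfolding fin_graph_def by auto
  define n where "n = card V"
  have n1: "n \<ge> 1" using False fV unfolding n_def by (simp add: Suc_le_eq card_gt_0_iff)
  obtain \<phi> where phi: "bij_betw \<phi> {0..<n} V" using ex_bij_betw_nat_finite[OF fV] unfolding n_def by blast
  have k1: "k \<ge> 1" and g1: "g \<ge> 1" using assms by auto
  define M where "M = 4*k + 2*n*n + 2"
  define B0 where "B0 = 2*k*n*M"
  define K where "K = 4*g*B0^g"
  define N where "N = 2*k*K*M"
  define a where "a = K*M"
  have Mp: "M \<ge> 1" unfolding M_def by simp
  have "1 \<le> 2*k*n*M" using n1 k1 Mp by (simp add: one_le_mult_iff)
  then have B0p: "B0 \<ge> 1" unfolding B0_def by simp
  have Kp: "K \<ge> 1" using g1 B0p unfolding K_def by simp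
  have a1: "a \<ge> 1" using Kp Mp unfolding a_def by (simp add: one_le_mult_iff)
  have Na: "N = 2*k*a" unfolding N_def a_def by simp
  have Npos: "N > 0" using Na k1 a1 by simp
  define X where "X = {0..<n*N}"
  define hh where "hh x = \<phi> (x div N)" for x
  define U where "U = {{x,y} | x y. x \<in> X \<and> y \<in> X \<and> (hh x, hh y) \<in> E}"
  define F where "F v = {x \<in> X. hh x = v}" for v
  define J where "J e = {(A,B). A \<in> Pow (F (fst e)) \<and> B \<in> Pow (F (snd e)) \<and> card A = a \<and> card B = a}" for e
  define I where "I = (\<Union>e\<in>E. J e)"
  have fX: "finite X" unfolding X_def by simp
  have cX: "card X = n*N" unfolding X_def by simp
  have hhV: "hh x \<in> V" if "x \<in> X" for x
  proof -
    have "x div N < n" using that Npos unfolding X_def by (simp add: less_mult_imp_div_less)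
    then show ?thesis using phi unfolding hh_def bij_betw_def by auto
  qed
  have fU: "finite U"
  proof -
    have "U \<subseteq> Pow X" unfolding U_def by auto
    then show ?thesis using fX by (meson finite_Pow_iff finite_subset)
  qed
  have Fcard: "card (F v) = N" if vV: "v \<in> V" for v
  proof -
    obtain j where j: "j < n" "\<phi> j = v" using phi vV unfolding bij_betw_def by auto
    have "F v = {j*N..<j*N+N}"
      unfolding F_def X_def hh_def using fiber_eq[OF Npos j(1)] phi j unfolding bij_betw_def by auto
    then show ?thesis by simp
  qed
  have fF: "finite (F v)" for v unfolding F_def using fX by simp
  have FX: "F v \<subseteq> X" for v unfolding F_def by auto
  have JP: "J e \<subseteq> Pow (F (fst e)) \<times> Pow (F (snd e))" for e unfolding J_def by auto
  have fE: "finite E" using EV fV by (meson finite_SigmaI finite_subset)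
  have fJ: "finite (J e)" for e using JP[of e] fF by (meson finite_Pow_iff finite_SigmaI finite_subset)
  have fI: "finite I" unfolding I_def using fE fJ by simp
  have cE: "card E \<le> n*n" unfolding n_def using EV fV by (metis card_cartesian_product card_mono finite_SigmaI)
  have cJ: "card (J e) \<le> 2^N * 2^N" if "e \<in> E" for e
  proof -
    have "fst e \<in> V" "snd e \<in> V" using that EV by auto
    then have "card (Pow (F (fst e)) \<times> Pow (F (snd e))) = 2^N * 2^N"
      using Fcard fF by (simp add: card_cartesian_product card_Pow)
    then show ?thesis using card_mono[OF _ JP[of e]] fF by simp
  qed
  have cI: "card I \<le> n*n*4^N"
  proof -
    have "card I \<le> (\<Sum>e\<in>E. card (J e))" unfolding I_def by (rule card_UN_le[OF fE])
    also have "\<dots> \<le> (\<Sum>e\<in>E. 2^N * 2^N)" using cJ by (intro sum_mono) auto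
    also have "\<dots> = card E * 4^N" by (simp add: power_mult_distrib[symmetric])
    also have "\<dots> \<le> n*n*4^N" using cE by simp
    finally show ?thesis .
  qed
  have Iprop: "A \<inter> B = {} \<and> finite A \<and> finite B \<and> card A = a \<and> card B = a
                 \<and> {{x,y} | x y. x \<in> A \<and> y \<in> B} \<subseteq> U" if AB: "(A,B) \<in> I" for A B
  proof -
    obtain u v where uv: "(u,v) \<in> E" "(A,B) \<in> J (u,v)" using AB unfolding I_def by auto
    have ne: "u \<noteq> v" using uv(1) irrE unfolding irrefl_def by auto
    have A: "A \<subseteq> F u" "card A = a" and B: "B \<subseteq> F v" "card B = a" using uv(2) unfolding J_def by auto
    have "A \<inter> B = {}" using A B ne unfolding F_def by auto
    moreover have "finite A" "finite B" using A B fF by (auto intro: finite_subset)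
    moreover have "{{x,y} | x y. x \<in> A \<and> y \<in> B} \<subseteq> U"
      using A B uv(1) unfolding U_def F_def by blast
    ultimately show ?thesis using A B by auto
  qed
  have p01: "0 \<le> 1 / real K" "1 / real K \<le> 1" using Kp by auto
  have num: "2 / real N * (\<Sum>L<g. (real (n*N) * (1 / real K)) ^ L)
          + real (n*n) * 4 ^ N * (1 - 1 / real K) ^ (a*a) < 1"
    by (rule numeric[OF n1 k1 g1 M_def B0_def K_def N_def a_def])
  have "real (card I) * (1 - 1 / real K) ^ (a*a) \<le> real (n*n) * 4 ^ N * (1 - 1 / real K) ^ (a*a)"
  proof (intro mult_right_mono)
    show "real (card I) \<le> real (n*n) * 4 ^ N" using cI by (metis of_nat_le_iff of_nat_mult of_nat_numeral of_nat_power)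
  qed (use p01 in simp)
  then have bound: "2 / real N * (\<Sum>L<g. (real (card X) * (1 / real K)) ^ L) + real (card I) * (1 - 1 / real K) ^ (a * a) < 1"
    using num cX by simp
  obtain S where S: "S \<in> Pow U"
    and Scyc: "2 * card {vs. set vs \<subseteq> X \<and> length vs < g \<and> is_cycle X (Ed S) vs} < N"
    and Shole: "\<forall>(A,B)\<in>I. \<exists>x\<in>A. \<exists>y\<in>B. {x,y} \<in> S"
    using good_exists[OF fX fU p01 Npos fI Iprop bound] by blast
  define Cy where "Cy = {vs. set vs \<subseteq> X \<and> length vs < g \<and> is_cycle X (Ed S) vs}"
  define D where "D = hd ` Cy"
  define V' where "V' = X - D"
  define E' where "E' = Ed S \<inter> (V' \<times> V')"
  have fCy: "finite Cy"
  proof -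
    have "Cy \<subseteq> {vs. set vs \<subseteq> X \<and> length vs \<le> g}" unfolding Cy_def by auto
    then show ?thesis using finite_lists_length_le[OF fX] by (rule finite_subset)
  qed
  have cD: "2 * card D < N" using Scyc card_image_le[OF fCy, of hd] unfolding D_def Cy_def by linarith
  have SU: "S \<subseteq> U" using S by simp
  have EdU: "(x,y) \<in> Ed S \<Longrightarrow> \<exists>x' y'. {x,y} = {x',y'} \<and> x' \<in> X \<and> y' \<in> X \<and> (hh x', hh y') \<in> E" for x y
    using SU unfolding Ed_def U_def by auto
  have EdE: "(hh x, hh y) \<in> E" and EdX: "x \<in> X" "y \<in> X" if xy: "(x,y) \<in> Ed S" for x y
  proof -
    obtain x' y' where *: "{x,y} = {x',y'}" "x' \<in> X" "y' \<in> X" "(hh x', hh y') \<in> E" using EdU[OF xy] by blast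
    then have "(x = x' \<and> y = y') \<or> (x = y' \<and> y = x')" by (auto simp: doubleton_eq_iff)
    then show "(hh x, hh y) \<in> E" "x \<in> X" "y \<in> X" using * symE unfolding sym_def by auto
  qed
  have G1: "fin_graph V' E'"
    unfolding fin_graph_def
  proof (intro conjI)
    show "finite V'" unfolding V'_def using fX by simp
    show "E' \<subseteq> V' \<times> V'" unfolding E'_def by auto
    show "sym E'" unfolding sym_def E'_def Ed_def by (auto simp: insert_commute)
    show "irrefl E'" unfolding irrefl_def
    proof (intro allI notI)
      fix x assume "(x,x) \<in> E'"
      then have "(hh x, hh x) \<in> E" using EdE unfolding E'_def by auto
      then show False using irrE unfolding irrefl_def by auto
    qed
  qed
  have G2: "girth_at_least V' E' g" unfolding girth_at_least_def
  proof (intro allI impI)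
    fix vs assume c: "is_cycle V' E' vs"
    show "g \<le> length vs"
    proof (rule ccontr)
      assume "\<not> g \<le> length vs"
      then have l: "length vs < g" by simp
      have c2: "is_cycle X (Ed S) vs" using c unfolding is_cycle_def V'_def E'_def by auto
      have sv: "set vs \<subseteq> V'" using c unfolding is_cycle_def by auto
      then have "vs \<in> Cy" unfolding Cy_def V'_def using l c2 by auto
      then have "hd vs \<in> D" unfolding D_def by simp
      moreover have "vs \<noteq> []" using c unfolding is_cycle_def by auto
      then have "hd vs \<in> V'" using sv by (meson hd_in_set subsetD)
      ultimately show False unfolding V'_def by simp
    qed
  qed
  have G3: "graph_hom V' E' V E hh" unfolding graph_hom_def
    using hhV EdE unfolding V'_def E'_def by auto
  have Rbig: "N < 2 * card (F v - D)" if "v \<in> V" for v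
  proof -
    have "F v \<subseteq> (F v - D) \<union> D" by auto
    then have "card (F v) \<le> card ((F v - D) \<union> D)" using fF fCy unfolding D_def by (intro card_mono) auto
    also have "\<dots> \<le> card (F v - D) + card D" by (rule card_Un_le)
    finally show ?thesis using Fcard[OF that] cD by linarith
  qed
  have RV': "F v - D \<subseteq> V'" for v unfolding V'_def F_def by auto
  have G4: "hh ` V' = V"
  proof
    show "hh ` V' \<subseteq> V" using hhV unfolding V'_def by auto
    show "V \<subseteq> hh ` V'"
    proof
      fix v assume v: "v \<in> V"
      then have "F v - D \<noteq> {}" using Rbig[OF v] by (metis card.empty gr_implies_not0 mult_0_right)
      then obtain x where "x \<in> F v - D" by blast
      then show "v \<in> hh ` V'" using RV'[of v] unfolding F_def by force
    qed
  qed
  have G5: "\<exists>c. proper_colouring V E k c \<and> (\<forall>v \<in> V. c v \<in> c' ` {u \<in> V'. hh u = v})"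
    if pc: "proper_colouring V' E' k c'" for c'
  proof -
    have c'r: "c' x \<in> {1..k}" if "x \<in> V'" for x using pc that unfolding proper_colouring_def by auto
    have c'p: "c' x \<noteq> c' y" if "(x,y) \<in> E'" for x y using pc that unfolding proper_colouring_def by auto
    define cls where "cls v i = {x \<in> F v - D. c' x = i}" for v i
    have ex: "\<exists>i. i \<in> {1..k} \<and> a \<le> card (cls v i)" if v: "v \<in> V" for v
    proof (rule ccontr)
      assume "\<not> ?thesis"
      then have lt: "card (cls v i) \<le> a - 1" if "i \<in> {1..k}" for i using that by fastforce
      have "F v - D = (\<Union>i\<in>{1..k}. cls v i)" unfolding cls_def using c'r RV' by fastforce
      then have "card (F v - D) \<le> (\<Sum>i\<in>{1..k}. card (cls v i))" by (simp add: card_UN_le)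
      also have "\<dots> \<le> (\<Sum>i\<in>{1..k}. a - 1)" using lt by (intro sum_mono) auto
      also have "\<dots> = k * (a - 1)" by simp
      finally have "2 * card (F v - D) \<le> 2 * k * (a - 1)" by simp
      also have "\<dots> < N" unfolding Na using a1 k1 by (simp add: diff_mult_distrib2)
      finally show False using Rbig[OF v] by simp
    qed
    define col where "col v = (SOME i. i \<in> {1..k} \<and> a \<le> card (cls v i))" for v
    have col: "col v \<in> {1..k} \<and> a \<le> card (cls v (col v))" if "v \<in> V" for v
      unfolding col_def using someI_ex[OF ex[OF that]] .
    have "proper_colouring V E k col" unfolding proper_colouring_def
    proof (intro conjI)
      show "col ` V \<subseteq> {1..k}" using col by auto
      show "\<forall>(u, v)\<in>E. col u \<noteq> col v"
      proof (intro ballI, clarify)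
        fix u v assume uv: "(u,v) \<in> E" and eq: "col u = col v"
        have uV: "u \<in> V" and vV: "v \<in> V" using uv EV by auto
        obtain A where A: "A \<subseteq> cls u (col u)" "card A = a" using obtain_subset_with_card_n col[OF uV] by metis
        obtain B where B: "B \<subseteq> cls v (col v)" "card B = a" using obtain_subset_with_card_n col[OF vV] by metis
        have "cls u (col u) \<subseteq> F u" "cls v (col v) \<subseteq> F v" unfolding cls_def by auto
        then have "(A,B) \<in> J (u,v)" unfolding J_def using A B by auto
        then have "(A,B) \<in> I" unfolding I_def using uv by auto
        then obtain x y where xy: "x \<in> A" "y \<in> B" "{x,y} \<in> S" using Shole by blast
        have "x \<in> V'" "y \<in> V'" using xy A B RV' unfolding cls_def by auto
        then have "(x,y) \<in> E'" using xy unfolding E'_def Ed_def by auto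
        then have "c' x \<noteq> c' y" by (rule c'p)
        moreover have "c' x = col u" "c' y = col v" using xy A B unfolding cls_def by auto
        ultimately show False using eq by simp
      qed
    qed
    moreover have "col v \<in> c' ` {u \<in> V'. hh u = v}" if v: "v \<in> V" for v
    proof -
      have "cls v (col v) \<noteq> {}" using col[OF v] a1 by (metis card.empty not_one_le_zero order_trans)
      then obtain x where "x \<in> cls v (col v)" by blast
      then show ?thesis using RV'[of v] unfolding cls_def F_def by force
    qed
    ultimately show ?thesis by blast
  qed
  show ?thesis using G1 G2 G3 G4 G5 by blast
qed

end
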